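(* Let $N\ge 2$, $m\ge 3$ be integers and fix $K$ with $0<K<N$. Then the linear span of the vertex functions $\iota_k\varphi$ on $\mathcal{B}_N\vdash\mathcal{C}_m$, where $k\in\mathbb{Z}_m$ and $\varphi$ ranges over the Dirichlet eigenvectors of $L(\mathcal{B}_N)$ with eigenvalue $2K$, has dimension $m\left(\binom{N}{K}-1\right)$.
   Context: For a finite simple undirected graph $\mathcal{G}$, $L(\mathcal{G})$ denotes the unnormalized Laplacian $(Lf)(v)=\sum_{w\sim v}[f(v)-f(w)]$. The Boolean cube $\mathcal{B}_N$ has vertex set $\mathbb{Z}_2^N$, with $v\sim w$ iff $v-w=e_i$ for some standard basis vector $e_i$; its Laplacian eigenvalues are $2\kappa$, $\kappa=0,\dots,N$, the $2\kappa$-eigenspace being spanned by the Hadamard vectors $h_\gamma(v)=2^{-N/2}(-1)^{\langle v,\gamma\rangle}$ with $\gamma\in\mathbb{Z}_2^N$ having exactly $\kappa$ coordinates equal to $1$. Write $\mathbf{0}=(0,\dots,0)$, $\mathbf{1}=(1,\dots,1)$. The graph $\mathcal{B}_N\vdash\mathcal{C}_m$ is obtained by taking $m$ disjoint copies $\mathcal{B}_N^k$, $k\in\mathbb{Z}_m$, of $\mathcal{B}_N$ (the copy of $v$ in $\mathcal{B}_N^k$ denoted $v^k$), keeping all edges inside each copy, and adding for each $k\in\mathbb{Z}_m$ the edge $\mathbf{1}^k\sim\mathbf{0}^{k+1}$ (indices mod $m$). A Dirichlet eigenvector of $L(\mathcal{B}_N)$ is an eigenvector of $L(\mathcal{B}_N)$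 vanishing at $\mathbf{0}$ and $\mathbf{1}$. For a vertex function $\varphi$ on $\mathcal{B}_N$, $\iota_k\varphi$ is the function on $\mathcal{B}_N\vdash\mathcal{C}_m$ equal to $\varphi(u)$ at $u^k$ and to $0$ on $\mathcal{B}_N^\ell$, $\ell\ne k$. *)

theory Defs
  imports "HOL-Analysis.Analysis" "HOL-Library.Function_Algebras"
begin

text \<open>Boolean cube B_N: vertices are subsets of {0..<N} (indicator sets of vectors in Z_2^N);
  v ~ w iff they differ in exactly one coordinate.\<close>

definition cube_verts :: "nat \<Rightarrow> nat set set" where
  "cube_verts N = Pow {..<N}"

definition cube_adj :: "nat \<Rightarrow> nat set \<Rightarrow> nat set \<Rightarrow> bool" where
  "cube_adj N v w \<longleftrightarrow> (\<exists>i<N. w = (v - {i}) \<union> ({i} - v))"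

definition laplacian :: "'a set \<Rightarrow> ('a \<Rightarrow> 'a \<Rightarrow> bool) \<Rightarrow> ('a \<Rightarrow> real) \<Rightarrow> 'a \<Rightarrow> real" where
  "laplacian V adj f v = (\<Sum>w\<in>{w\<in>V. adj v w}. f v - f w)"

text \<open>Dirichlet eigenvector of L(B_N) with eigenvalue lam: a nonzero vertex function
  (extended by 0 outside the vertex set) with L phi = lam phi, vanishing at 0 = {} and 1 = {..<N}.\<close>

definition dirichlet_eigvec :: "nat \<Rightarrow> real \<Rightarrow> (nat set \<Rightarrow> real) \<Rightarrow> bool" where
  "dirichlet_eigvec N lam phi \<longleftrightarrow>
     (\<forall>v. v \<notin> cube_verts N \<longrightarrow> phi v = 0) \<and>
     (\<exists>v\<in>cube_verts N. phi v \<noteq> 0) \<and>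
     (\<forall>v\<in>cube_verts N. laplacian (cube_verts N) (cube_adj N) phi v = lam * phi v) \<and>
     phi {} = 0 \<and> phi {..<N} = 0"

text \<open>Vertices of B_N |- C_m are pairs (k, v) with k < m (copy index in Z_m) and v in B_N.
  iota k phi is phi on copy k and 0 elsewhere.\<close>

definition iota :: "nat \<Rightarrow> nat \<Rightarrow> (nat set \<Rightarrow> real) \<Rightarrow> (nat \<times> nat set \<Rightarrow> real)" where
  "iota N k phi = (\<lambda>(l, u). if l = k \<and> u \<in> cube_verts N then phi u else 0)"

definition fscale :: "real \<Rightarrow> ('a \<Rightarrow> real) \<Rightarrow> ('a \<Rightarrow> real)" where
  "fscale c f = (\<lambda>x. c * f x)"

lemma vector_space_fscale: "vector_space (fscale :: real \<Rightarrow> ('a \<Rightarrow> real) \<Rightarrow> _)"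
  by unfold_locales (auto simp: fscale_def algebra_simps)

end

theory Submission
  imports Defs
begin

definition cc :: "nat set \<Rightarrow> nat set \<Rightarrow> real" where
  "cc g v = (-1) ^ card (g \<inter> v)"

definition sd :: "nat set \<Rightarrow> nat \<Rightarrow> nat set" where
  "sd v i = (v - {i}) \<union> ({i} - v)"

definition chi :: "nat \<Rightarrow> nat set \<Rightarrow> nat set \<Rightarrow> real" where
  "chi N g v = (if v \<subseteq> {..<N} then cc g v else 0)"

lemma sum_fun_apply: "(\<Sum>x\<in>A. F x) p = (\<Sum>x\<in>A. (F x p :: real))"
  by (induction A rule: infinite_finite_induct) auto

lemma cc_comm: "cc g v = cc v g"
  by (simp add: cc_def Int_commute)

lemma cc_sd:
  assumes "finite g"
  shows "cc g (sd v i) = (if i \<in> g then -1 else 1) * cc g v"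
proof (cases "i \<in> g")
  case False
  then have "g \<inter> sd v i = g \<inter> v" by (auto simp: sd_def)
  then show ?thesis using False by (simp add: cc_def)
next
  case True
  show ?thesis
  proof (cases "i \<in> v")
    case True
    have e: "g \<inter> sd v i = (g \<inter> v) - {i}" using True by (auto simp: sd_def)
    have "card (g \<inter> v) = Suc (card ((g \<inter> v) - {i}))"
      using True \<open>i \<in> g\<close> assms by (metis IntI card_Suc_Diff1 finite_Int)
    then show ?thesis using \<open>i \<in> g\<close> by (simp add: cc_def e)
  next
    case False
    have e: "g \<inter> sd v i = insert i (g \<inter> v)" using \<open>i \<in> g\<close> False by (auto simp: sd_def)
    have "card (insert i (g \<inter> v)) = Suc (card (g \<inter> v))"
      using False assms by simp
    then show ?thesis using \<open>i \<in> g\<close> by (simp add: cc_def e)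
  qed
qed

lemma sd_sub: "v \<subseteq> {..<N} \<Longrightarrow> i < N \<Longrightarrow> sd v i \<subseteq> {..<N}"
  by (auto simp: sd_def)

lemma sd_sd: "sd (sd v i) i = v"
  by (auto simp: sd_def)

lemma sum_sd_reindex:
  assumes "i < N"
  shows "(\<Sum>v\<in>Pow {..<N}. F (sd v i)) = (\<Sum>v\<in>Pow {..<N}. (F v :: real))"
  by (rule sum.reindex_bij_witness[where i="\<lambda>v. sd v i" and j="\<lambda>v. sd v i"])
     (auto simp: sd_sd assms dest: sd_sub[OF _ assms])

lemma sum_antisym_zero:
  assumes "i < N" and "\<And>v. v \<subseteq> {..<N} \<Longrightarrow> F (sd v i) = - F v"
  shows "(\<Sum>v\<in>Pow {..<N}. (F v :: real)) = 0"
proof -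
  have "(\<Sum>v\<in>Pow {..<N}. F v) = (\<Sum>v\<in>Pow {..<N}. F (sd v i))"
    using sum_sd_reindex[OF assms(1)] by simp
  also have "\<dots> = - (\<Sum>v\<in>Pow {..<N}. F v)"
    by (simp add: assms(2) sum_negf)
  finally show ?thesis by simp
qed

lemma cc_sq: "cc g v * cc g v = 1"
  by (simp add: cc_def flip: power_add)

lemma orth:
  assumes "a \<subseteq> {..<N}" "b \<subseteq> {..<N}"
  shows "(\<Sum>v\<in>Pow {..<N}. cc a v * cc b v) = (if a = b then 2 ^ N else 0)"
proof (cases "a = b")
  case True
  then show ?thesis by (simp add: cc_sq card_Pow)
next
  case False
  then obtain i where i: "i \<in> a \<and> i \<notin> b \<or> i \<in> b \<and> i \<notin> a" by blast
  then have iN: "i < N" using assms by auto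
  have fa: "finite a" "finite b" using assms finite_subset by auto
  have "(\<Sum>v\<in>Pow {..<N}. cc a v * cc b v) = 0"
    by (rule sum_antisym_zero[OF iN]) (use i fa in \<open>auto simp: cc_sd\<close>)
  then show ?thesis using False by simp
qed

lemma sd_inj: "inj_on (sd v) A"
proof (rule inj_onI)
  fix i j assume "sd v i = sd v j"
  then have "i \<in> sd v i \<longleftrightarrow> i \<in> sd v j" by simp
  then show "i = j" by (auto simp: sd_def)
qed

lemma lap_cube:
  assumes "v \<subseteq> {..<N}"
  shows "laplacian (cube_verts N) (cube_adj N) f v = (\<Sum>i<N. f v - f (sd v i))"
proof -
  have "{w \<in> cube_verts N. cube_adj N v w} = sd v ` {..<N}"
    using assms by (auto simp: cube_verts_def cube_adj_def sd_def)
  then show ?thesis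
    unfolding laplacian_def by (simp add: sum.reindex[OF sd_inj])
qed

lemma chi_eigen:
  assumes "g \<subseteq> {..<N}" "v \<subseteq> {..<N}"
  shows "laplacian (cube_verts N) (cube_adj N) (chi N g) v = 2 * card g * chi N g v"
proof -
  have fg: "finite g" using assms finite_subset by auto
  have "laplacian (cube_verts N) (cube_adj N) (chi N g) v
      = (\<Sum>i<N. (if i \<in> g then 2 * cc g v else 0))"
    unfolding lap_cube[OF assms(2)]
    by (rule sum.cong) (use assms sd_sub fg in \<open>auto simp: chi_def cc_sd\<close>)
  also have "\<dots> = (\<Sum>i\<in>g. 2 * cc g v)"
    using assms(1) by (simp add: sum.If_cases Int_absorb1 Int_absorb2 Int_commute)
  finally show ?thesis using assms by (simp add: chi_def)
qed

definition coef :: "nat \<Rightarrow> (nat set \<Rightarrow> real) \<Rightarrow> nat set \<Rightarrow> real" where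
  "coef N phi g = (\<Sum>w\<in>Pow {..<N}. phi w * cc g w)"

lemma coef_zero:
  assumes g: "g \<subseteq> {..<N}" and eig: "\<And>v. v \<subseteq> {..<N} \<Longrightarrow>
      laplacian (cube_verts N) (cube_adj N) phi v = lam * phi v"
    and ne: "lam \<noteq> 2 * card g"
  shows "coef N phi g = 0"
proof -
  have fg: "finite g" using g finite_subset by auto
  have s: "(\<Sum>w\<in>Pow {..<N}. phi (sd w i) * cc g w) = (if i \<in> g then -1 else 1) * coef N phi g"
    if "i < N" for i
  proof -
    have "(\<Sum>w\<in>Pow {..<N}. phi (sd w i) * cc g w) = (\<Sum>w\<in>Pow {..<N}. phi (sd w i) * cc g (sd (sd w i) i))"
      by (simp add: sd_sd)
    also have "\<dots> = (\<Sum>w\<in>Pow {..<N}. phi w * cc g (sd w i))"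
      using sum_sd_reindex[OF that, of "\<lambda>w. phi w * cc g (sd w i)"] by simp
    also have "\<dots> = (if i \<in> g then -1 else 1) * coef N phi g"
      by (simp add: cc_sd fg coef_def sum_distrib_left algebra_simps)
    finally show ?thesis .
  qed
  have "lam * coef N phi g = (\<Sum>w\<in>Pow {..<N}. laplacian (cube_verts N) (cube_adj N) phi w * cc g w)"
    by (simp add: coef_def sum_distrib_left eig mult.assoc)
  also have "\<dots> = (\<Sum>w\<in>Pow {..<N}. \<Sum>i<N. (phi w - phi (sd w i)) * cc g w)"
    by (simp add: lap_cube sum_distrib_right)
  also have "\<dots> = (\<Sum>i<N. coef N phi g - (\<Sum>w\<in>Pow {..<N}. phi (sd w i) * cc g w))"
    by (subst sum.swap) (simp add: left_diff_distrib sum_subtractf coef_def)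
  also have "\<dots> = (\<Sum>i<N. (if i \<in> g then 2 * coef N phi g else 0))"
    by (rule sum.cong) (auto simp: s)
  also have "\<dots> = 2 * card g * coef N phi g"
    using g by (simp add: sum.If_cases Int_absorb1 Int_absorb2 Int_commute)
  finally show ?thesis using ne by simp
qed

lemma inversion:
  assumes "v \<subseteq> {..<N}"
  shows "2 ^ N * phi v = (\<Sum>g\<in>Pow {..<N}. coef N phi g * cc g v)"
proof -
  have "(\<Sum>g\<in>Pow {..<N}. coef N phi g * cc g v)
      = (\<Sum>w\<in>Pow {..<N}. phi w * (\<Sum>g\<in>Pow {..<N}. cc w g * cc v g))"
    unfolding coef_def sum_distrib_left sum_distrib_right
    by (subst sum.swap) (simp add: cc_comm mult_ac)
  also have "\<dots> = (\<Sum>w\<in>Pow {..<N}. (if w = v then 2 ^ N * phi v else 0))"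
    by (rule sum.cong) (use assms in \<open>auto simp: orth\<close>)
  also have "\<dots> = 2 ^ N * phi v" using assms by simp
  finally show ?thesis by simp
qed

lemma lap_diff: "laplacian V adj (\<lambda>v. f v - h v) v = laplacian V adj f v - laplacian V adj h v"
  unfolding laplacian_def by (simp add: sum_subtractf[symmetric]) (rule sum.cong; simp)

theorem lemma2:
  fixes N m K :: nat
  assumes "N \<ge> 2" and "m \<ge> 3" and "0 < K" and "K < N"
  shows "vector_space.dim fscale
           (module.span fscale
              {iota N k phi | k phi. k < m \<and> dirichlet_eigvec N (2 * real K) phi})
         = m * ((N choose K) - 1)"
proof -
  interpret V: vector_space "fscale :: real \<Rightarrow> (nat \<times> nat set \<Rightarrow> real) \<Rightarrow> _"
    by (rule vector_space_fscale)
  define S where "S = {iota N k phi | k phi. k < m \<and> dirichlet_eigvec N (2 * real K) phi}"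
  define G where "G = {g. g \<subseteq> {..<N} \<and> card g = K}"
  define g0 where "g0 = {..<K}"
  define G' where "G' = G - {g0}"
  define psi where "psi g = (\<lambda>v. chi N g v - chi N g0 v)" for g
  define I where "I = {..<m} \<times> G'"
  define f where "f = (\<lambda>(k, g). iota N k (psi g))"
  define B where "B = f ` I"
  define dual where "dual l d F = (\<Sum>v\<in>Pow {..<N}. F (l, v) * cc d v)"
    for l d and F :: "nat \<times> nat set \<Rightarrow> real"
  have g0G: "g0 \<in> G" using assms by (auto simp: G_def g0_def)
  have g0sub: "g0 \<subseteq> {..<N}" using g0G by (simp add: G_def)
  have finG: "finite G" unfolding G_def by (rule finite_subset[of _ "Pow {..<N}"]) auto
  have cardG: "card G = N choose K"
    unfolding G_def using n_subsets[of "{..<N}" K] by simp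
  have G'sub: "g \<subseteq> {..<N}" "card g = K" "g \<noteq> g0" if "g \<in> G'" for g
    using that by (auto simp: G'_def G_def)
  have cc_empty: "cc g {} = 1" for g by (simp add: cc_def)
  have cc_full: "cc g {..<N} = (-1) ^ K" if "g \<in> G" for g
    using that by (simp add: cc_def G_def Int_absorb2)
  have dual_f: "dual l d (f (k, g)) = (if k = l \<and> g = d then 2 ^ N else 0)"
    if "g \<in> G'" "d \<in> G'" for k l g d
  proof -
    have "dual l d (f (k, g)) = (\<Sum>v\<in>Pow {..<N}. (if l = k then cc g v * cc d v - cc g0 v * cc d v else 0))"
      unfolding dual_def f_def
      by (rule sum.cong) (auto simp: iota_def psi_def chi_def cube_verts_def algebra_simps)
    also have "\<dots> = (if k = l \<and> g = d then 2 ^ N else 0)"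
      using G'sub[OF that(1)] G'sub[OF that(2)] g0sub
      by (cases "l = k") (simp_all add: sum_subtractf orth)
    finally show ?thesis .
  qed
  have dual_lin: "dual l d (\<Sum>x\<in>A. fscale (u x) x) = (\<Sum>x\<in>A. u x * dual l d x)" for l d u A
    unfolding dual_def sum_fun_apply fscale_def sum_distrib_right sum_distrib_left
    by (subst sum.swap) (simp add: mult_ac)
  have inj: "inj_on f I"
  proof (rule inj_onI)
    fix x y assume x: "x \<in> I" and y: "y \<in> I" and e: "f x = f y"
    obtain k g where xk: "x = (k, g)" "g \<in> G'" using x by (auto simp: I_def)
    obtain l d where yl: "y = (l, d)" "d \<in> G'" using y by (auto simp: I_def)
    have "dual k g (f (k, g)) = dual k g (f (l, d))" using e xk yl by simp
    then show "x = y" using dual_f[OF xk(2) xk(2)] dual_f[OF yl(2) xk(2)] xk yl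
      by (auto split: if_splits)
  qed
  have finI: "finite I" using finG by (simp add: I_def G'_def)
  have cardB: "card B = m * ((N choose K) - 1)"
    unfolding B_def card_image[OF inj] using finG g0G cardG
    by (simp add: I_def G'_def card_cartesian_product)
  have psi_dir: "dirichlet_eigvec N (2 * real K) (psi g)" if g: "g \<in> G'" for g
  proof -
    note gs = G'sub[OF g]
    have "(\<Sum>v\<in>Pow {..<N}. psi g v * cc g v) = (\<Sum>v\<in>Pow {..<N}. cc g v * cc g v - cc g0 v * cc g v)"
      by (rule sum.cong) (auto simp: psi_def chi_def left_diff_distrib)
    also have "\<dots> = 2 ^ N"
      using gs g0sub by (simp add: sum_subtractf orth)
    finally have "(\<Sum>v\<in>Pow {..<N}. psi g v * cc g v) = 2 ^ N" .
    then have "\<exists>v\<in>cube_verts N. psi g v \<noteq> 0"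
      by (auto simp: cube_verts_def) (metis (no_types, lifting) mult_eq_0_iff sum.neutral zero_neq_numeral power_not_zero)
    moreover have "\<forall>v\<in>cube_verts N. laplacian (cube_verts N) (cube_adj N) (psi g) v = 2 * real K * psi g v"
    proof
      fix v assume "v \<in> cube_verts N"
      then have v: "v \<subseteq> {..<N}" by (simp add: cube_verts_def)
      have "card g0 = K" using g0G by (simp add: G_def)
      then show "laplacian (cube_verts N) (cube_adj N) (psi g) v = 2 * real K * psi g v"
        unfolding psi_def lap_diff chi_eigen[OF gs(1) v] chi_eigen[OF g0sub v]
        using gs by (simp add: algebra_simps)
    qed
    moreover have "psi g {} = 0" by (simp add: psi_def chi_def cc_empty)
    moreover have "psi g {..<N} = 0"
      using g g0G by (simp add: psi_def chi_def cc_full G'_def)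
    ultimately show ?thesis
      by (auto simp: dirichlet_eigvec_def psi_def chi_def cube_verts_def)
  qed
  have BS: "B \<subseteq> S"
    using psi_dir by (auto simp: B_def S_def I_def f_def)
  have SB: "S \<subseteq> V.span B"
  proof
    fix s assume "s \<in> S"
    then obtain k phi where s: "s = iota N k phi" "k < m" "dirichlet_eigvec N (2 * real K) phi"
      by (auto simp: S_def)
    define a where "a g = coef N phi g / 2 ^ N" for g
    have out: "phi v = 0" if "\<not> v \<subseteq> {..<N}" for v
      using s(3) that by (auto simp: dirichlet_eigvec_def cube_verts_def)
    have eig: "laplacian (cube_verts N) (cube_adj N) phi v = 2 * real K * phi v" if "v \<subseteq> {..<N}" for v
      using s(3) that by (auto simp: dirichlet_eigvec_def cube_verts_def)
    have cz: "coef N phi g = 0" if "g \<subseteq> {..<N}" "g \<notin> G" for g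
      by (rule coef_zero[OF that(1) eig]) (use that in \<open>auto simp: G_def\<close>)
    have inv: "2 ^ N * phi v = (\<Sum>g\<in>G. coef N phi g * cc g v)" if "v \<subseteq> {..<N}" for v
      unfolding inversion[OF that]
      by (rule sum.mono_neutral_right) (auto simp: G_def cz)
    have sumG: "(\<Sum>g\<in>G. coef N phi g) = 0"
      using inv[of "{}"] s(3) by (simp add: cc_empty dirichlet_eigvec_def)
    have phi_eq: "phi v = (\<Sum>g\<in>G'. a g * psi g v)" for v
    proof (cases "v \<subseteq> {..<N}")
      case False
      then show ?thesis by (simp add: out psi_def chi_def)
    next
      case True
      have "2 ^ N * phi v = (\<Sum>g\<in>G. coef N phi g * cc g v) - (\<Sum>g\<in>G. coef N phi g) * cc g0 v"
        using inv[OF True] sumG by simp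
      also have "\<dots> = (\<Sum>g\<in>G. coef N phi g * (cc g v - cc g0 v))"
        by (simp add: sum_distrib_right sum_subtractf right_diff_distrib)
      also have "\<dots> = (\<Sum>g\<in>G'. coef N phi g * (cc g v - cc g0 v))"
        unfolding G'_def using finG g0G by (simp add: sum.remove)
      also have "\<dots> = 2 ^ N * (\<Sum>g\<in>G'. a g * psi g v)"
        using True by (simp add: a_def psi_def chi_def sum_distrib_left)
      finally show ?thesis by simp
    qed
    have "s = (\<Sum>g\<in>G'. fscale (a g) (f (k, g)))"
      unfolding s(1)
      by (rule ext) (auto simp: sum_fun_apply fscale_def iota_def f_def phi_eq)
    also have "\<dots> \<in> V.span B"
      by (intro V.span_sum V.span_scale V.span_base) (use s(2) in \<open>auto simp: B_def I_def\<close>)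
    finally show "s \<in> V.span B" .
  qed
  have indep: "V.independent B"
  proof
    assume "V.dependent B"
    then obtain u x0 where x0: "x0 \<in> B" "u x0 \<noteq> 0" and z: "(\<Sum>x\<in>B. fscale (u x) x) = 0"
      using V.dependent_finite[of B] finI by (auto simp: B_def)
    obtain l d where ld: "(l, d) \<in> I" "x0 = f (l, d)" using x0 by (auto simp: B_def)
    have d: "d \<in> G'" using ld by (auto simp: I_def)
    have dx: "dual l d x = (if x = x0 then 2 ^ N else 0)" if xB: "x \<in> B" for x
    proof -
      obtain k g where kg: "(k, g) \<in> I" "x = f (k, g)" using xB by (auto simp: B_def)
      have "(x = x0) = ((k, g) = (l, d))"
        using inj_onD[OF inj] kg ld by auto
      moreover have "g \<in> G'" using kg by (auto simp: I_def)
      ultimately show ?thesis using dual_f[where k=k and l=l and g=g and d=d] kg d by auto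
    qed
    have "0 = dual l d (\<Sum>x\<in>B. fscale (u x) x)" using z by (simp add: dual_def)
    also have "\<dots> = (\<Sum>x\<in>B. u x * dual l d x)" by (rule dual_lin)
    also have "\<dots> = (\<Sum>x\<in>B. (if x = x0 then u x0 * 2 ^ N else 0))"
      by (rule sum.cong) (auto simp: dx)
    also have "\<dots> = u x0 * 2 ^ N"
      using x0 finI by (simp add: B_def)
    finally show False using x0 by simp
  qed
  have "V.dim (V.span S) = m * ((N choose K) - 1)"
    by (rule V.dim_unique[OF _ _ indep cardB])
       (use BS SB V.span_minimal V.span_superset in blast)+
  then show ?thesis by (simp add: S_def)
qed

end
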